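(* Let $\mathbf{a}=(a_n)_{n\geq 1}$ be a strong divisibility sequence. Then for every positive integer $n$, \[\mathrm{lcm}(a_1,a_2,\dots,a_n)=\mathrm{lcm}\left\{a_1\binom{n}{1}_{\mathbf{a}},a_2\binom{n}{2}_{\mathbf{a}},\dots,a_n\binom{n}{n}_{\mathbf{a}}\right\}.\]
   Context: A strong divisibility sequence is a sequence of positive integers $(a_n)_{n\geq1}$ such that $\gcd(a_n,a_m)=a_{\gcd(n,m)}$ for all positive integers $n,m$. For integers $0\leq k\leq n$, the $\mathbf{a}$-binomial coefficient is $\binom{n}{k}_{\mathbf{a}}:=\frac{a_na_{n-1}\cdots a_{n-k+1}}{a_1a_2\cdots a_k}$ (empty products equal $1$); for a strong divisibility sequence these are positive integers. *)

theory Defs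
  imports Main
begin

text \<open>A strong divisibility sequence (indexed from 1; the value at 0 is irrelevant).\<close>
definition strong_div_seq :: "(nat \<Rightarrow> nat) \<Rightarrow> bool" where
  "strong_div_seq a \<longleftrightarrow> (\<forall>n\<ge>1. a n > 0) \<and>
     (\<forall>n\<ge>1. \<forall>m\<ge>1. gcd (a n) (a m) = a (gcd n m))"

text \<open>The a-binomial coefficient: (a_n a_(n-1) ... a_(n-k+1)) / (a_1 ... a_k).
  For strong divisibility sequences the division is exact.\<close>
definition abinom :: "(nat \<Rightarrow> nat) \<Rightarrow> nat \<Rightarrow> nat \<Rightarrow> nat" where
  "abinom a n k = (\<Prod>i\<in>{n-k+1..n}. a i) div (\<Prod>i\<in>{1..k}. a i)"

end

theory Submission
  imports Defs "HOL-Computational_Algebra.Primes"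
begin

lemma count_mult:
  assumes "(r::nat) > 0"
  shows "(\<Sum>i\<in>{1..m}. if r dvd i then 1 else 0::nat) = m div r"
proof (induction m)
  case 0 then show ?case by simp
next
  case (Suc m)
  have "(\<Sum>i\<in>{1..Suc m}. if r dvd i then 1 else 0::nat)
      = (\<Sum>i\<in>{1..m}. if r dvd i then 1 else 0::nat) + (if r dvd Suc m then 1 else 0)"
    by (simp add: sum.cl_ivl_Suc)
  also have "\<dots> = Suc m div r" using Suc by (simp add: div_Suc dvd_eq_mod_eq_0)
  finally show ?case .
qed

lemma sds_mono:
  assumes "strong_div_seq a" "r \<ge> 1" "r dvd m" "m \<ge> 1"
  shows "a r dvd a m"
proof -
  have "gcd (a r) (a m) = a (gcd r m)" using assms(1,2,4) unfolding strong_div_seq_def by blast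
  also have "gcd r m = r" using assms(3) by (simp add: gcd_nat.absorb1)
  finally show ?thesis by (metis gcd_dvd2)
qed

lemma rank:
  assumes sds: "strong_div_seq a" and i0: "1 \<le> i0" "d dvd a i0"
  defines "r \<equiv> LEAST i. 1 \<le> i \<and> d dvd a i"
  shows "1 \<le> r" "r \<le> i0" "\<And>m. m \<ge> 1 \<Longrightarrow> d dvd a m \<longleftrightarrow> r dvd m"
proof -
  have R: "1 \<le> r \<and> d dvd a r" unfolding r_def by (rule LeastI[of _ i0]) (use i0 in auto)
  then show "1 \<le> r" by simp
  show "r \<le> i0" unfolding r_def by (rule Least_le) (use i0 in auto)
  fix m :: nat assume m: "m \<ge> 1"
  show "d dvd a m \<longleftrightarrow> r dvd m"
  proof
    assume "d dvd a m"
    then have "d dvd gcd (a r) (a m)" using R by simp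
    also have "gcd (a r) (a m) = a (gcd r m)" using sds R m unfolding strong_div_seq_def by blast
    finally have dg: "d dvd a (gcd r m)" .
    have g1: "1 \<le> gcd r m" using m by (simp add: Suc_le_eq)
    have "r \<le> gcd r m" using Least_le[where P="\<lambda>i. 1 \<le> i \<and> d dvd a i", OF conjI[OF g1 dg]]
      unfolding r_def .
    moreover have "gcd r m \<le> r" using R by (simp add: gcd_le1_nat)
    ultimately have "gcd r m = r" by simp
    then show "r dvd m" by (metis gcd_dvd2)
  next
    assume "r dvd m"
    then have "a r dvd a m" using sds_mono[OF sds] R m by blast
    then show "d dvd a m" using R dvd_trans by blast
  qed
qed

lemma div_arith1:
  fixes x y r :: nat
  shows "x div r + y div r \<le> (x + y) div r"
  by (metis div_add1_eq le_add1)

lemma div_arith2: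
  fixes x y r :: nat
  assumes "r > 0"
  shows "(x + y) div r \<le> x div r + y div r + 1"
proof -
  have "(x + y) div r = x div r + y div r + (x mod r + y mod r) div r"
    by (rule div_add1_eq)
  moreover have "(x mod r + y mod r) div r \<le> 1"
  proof -
    have "x mod r + y mod r < 2 * r" using assms mod_less_divisor[of r x] mod_less_divisor[of r y] by linarith
    then have "(x mod r + y mod r) div r < 2" by (simp add: div_less_iff_less_mult mult.commute)
    then show ?thesis by simp
  qed
  ultimately show ?thesis by simp
qed


lemma per_d:
  fixes d :: nat
  assumes sds: "strong_div_seq a" and k: "1 \<le> k" "k \<le> n"
  defines "ind \<equiv> \<lambda>m. if d dvd a m then 1 else (0::nat)"
  shows "(\<Sum>i\<in>{1..k}. ind i) \<le> (\<Sum>i\<in>{n-k+1..n}. ind i)"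
    and "ind k + (\<Sum>i\<in>{n-k+1..n}. ind i) \<le> (\<Sum>i\<in>{1..k}. ind i)
           + (if \<exists>i\<in>{1..n}. d dvd a i then 1 else 0)"
proof -
  have split: "(\<Sum>i\<in>{1..n}. ind i) = (\<Sum>i\<in>{1..n-k}. ind i) + (\<Sum>i\<in>{n-k+1..n}. ind i)"
    using sum.ub_add_nat[of 1 "n-k" ind k] k by simp
  have "(\<Sum>i\<in>{1..k}. ind i) \<le> (\<Sum>i\<in>{n-k+1..n}. ind i) \<and>
        ind k + (\<Sum>i\<in>{n-k+1..n}. ind i) \<le> (\<Sum>i\<in>{1..k}. ind i)
           + (if \<exists>i\<in>{1..n}. d dvd a i then 1 else 0)"
  proof (cases "\<exists>i\<in>{1..n}. d dvd a i")
    case True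
    then obtain i0 where i0: "1 \<le> i0" "i0 \<le> n" "d dvd a i0" by auto
    define r where "r = (LEAST i. 1 \<le> i \<and> d dvd a i)"
    have r1: "1 \<le> r" and rn: "r \<le> n" using rank(1,2)[OF sds i0(1,3)] i0(2) unfolding r_def by auto
    have iff: "\<And>m. m \<ge> 1 \<Longrightarrow> ind m = (if r dvd m then 1 else 0)"
      using rank(3)[OF sds i0(1,3)] unfolding r_def ind_def by auto
    have cnt: "(\<Sum>i\<in>{1..x}. ind i) = x div r" for x
    proof -
      have "(\<Sum>i\<in>{1..x}. ind i) = (\<Sum>i\<in>{1..x}. if r dvd i then 1 else 0)"
        by (rule sum.cong) (auto simp: iff)
      also have "\<dots> = x div r" using count_mult r1 by simp
      finally show ?thesis .
    qed
    have top: "(\<Sum>i\<in>{n-k+1..n}. ind i) = n div r - (n-k) div r"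
      using split cnt by simp
    have A1: "(n-k) div r + k div r \<le> n div r" using div_arith1[of "n-k" r k] k by simp
    have A2: "n div r \<le> (n-k) div r + k div r + 1" using div_arith2[of r "n-k" k] k r1 by simp
    have A3: "r dvd k \<Longrightarrow> n div r = (n-k) div r + k div r"
    proof -
      assume "r dvd k"
      then obtain t where t: "k = r * t" by blast
      have "n = (n - k) + r * t" using t k by simp
      then have "n div r = ((n - k) + r * t) div r" by simp
      also have "\<dots> = (n-k) div r + t" using r1 by simp
      finally show ?thesis using t r1 by simp
    qed
    have indk: "ind k = (if r dvd k then 1 else 0)" using iff k by simp
    show ?thesis using True A1 A2 A3 indk top cnt[of k] by auto
  next
    case False
    have z: "\<And>m. m \<in> {1..n} \<Longrightarrow> ind m = 0" using False unfolding ind_def by auto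
    have "(\<Sum>i\<in>{1..k}. ind i) = 0" using z k by simp
    moreover have "(\<Sum>i\<in>{n-k+1..n}. ind i) = 0" using z k by simp
    moreover have "ind k = 0" using z k by simp
    ultimately show ?thesis by simp
  qed
  then show "(\<Sum>i\<in>{1..k}. ind i) \<le> (\<Sum>i\<in>{n-k+1..n}. ind i)"
    and "ind k + (\<Sum>i\<in>{n-k+1..n}. ind i) \<le> (\<Sum>i\<in>{1..k}. ind i)
           + (if \<exists>i\<in>{1..n}. d dvd a i then 1 else 0)" by auto
qed


lemma sum_ind_le:
  fixes c B :: nat
  assumes "c \<le> B"
  shows "(\<Sum>e\<in>{1..B}. if e \<le> c then 1 else (0::nat)) = c"
proof -
  have "(\<Sum>e\<in>{1..B}. if e \<le> c then 1 else (0::nat)) = (\<Sum>e\<in>{e\<in>{1..B}. e \<le> c}. 1)"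
    by (rule sum.inter_filter[symmetric]) simp
  also have "{e\<in>{1..B}. e \<le> c} = {1..c}" using assms by auto
  finally show ?thesis by simp
qed

lemma core:
  assumes sds: "strong_div_seq a" and k: "1 \<le> k" "k \<le> n" and p: "prime (p::nat)"
  shows "multiplicity p (\<Prod>i\<in>{1..k}. a i) \<le> multiplicity p (\<Prod>i\<in>{n-k+1..n}. a i)"
    and "\<exists>j\<in>{1..n}. multiplicity p (a k) + multiplicity p (\<Prod>i\<in>{n-k+1..n}. a i)
            \<le> multiplicity p (\<Prod>i\<in>{1..k}. a i) + multiplicity p (a j)"
proof -
  have pos: "\<And>i. i \<ge> 1 \<Longrightarrow> a i > 0" using sds unfolding strong_div_seq_def by auto
  define v where "v i = multiplicity p (a i)" for i
  have fin: "finite (v ` {1..n})" and ne: "v ` {1..n} \<noteq> {}" using k by auto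
  obtain j where j: "j \<in> {1..n}" "v j = Max (v ` {1..n})" using Max_in[OF fin ne] by auto
  have vmax: "\<And>i. i \<in> {1..n} \<Longrightarrow> v i \<le> v j" using j fin by simp
  define B where "B = v j"
  define ind where "ind e i = (if p ^ e dvd a i then 1 else (0::nat))" for e i
  have nu: "\<not> is_unit p" using p by (metis prime_nat_iff_prime prime_imp_prime_elem prime_elem_not_unit)
  have vsum: "v i = (\<Sum>e\<in>{1..B}. ind e i)" if i: "i \<in> {1..n}" for i
  proof -
    have "a i \<noteq> 0" using pos i by fastforce
    then have "\<And>e. ind e i = (if e \<le> v i then 1 else 0)"
      unfolding ind_def v_def using power_dvd_iff_le_multiplicity[OF _ nu] by simp
    then have "(\<Sum>e\<in>{1..B}. ind e i) = (\<Sum>e\<in>{1..B}. if e \<le> v i then 1 else (0::nat))" by simp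
    also have "\<dots> = v i" using sum_ind_le vmax[OF i] unfolding B_def by simp
    finally show ?thesis by simp
  qed
  have mprod: "multiplicity p (\<Prod>i\<in>S. a i) = (\<Sum>e\<in>{1..B}. \<Sum>i\<in>S. ind e i)"
    if S: "S \<subseteq> {1..n}" for S
  proof -
    have fS: "finite S" using S finite_subset by blast
    have "0 \<notin> a ` S" using S pos by fastforce
    then have "multiplicity p (\<Prod>i\<in>S. a i) = (\<Sum>i\<in>S. v i)"
      unfolding v_def using prime_elem_multiplicity_prod_distrib[of p a S] p fS by simp
    also have "\<dots> = (\<Sum>i\<in>S. \<Sum>e\<in>{1..B}. ind e i)" using S vsum by (intro sum.cong) auto
    also have "\<dots> = (\<Sum>e\<in>{1..B}. \<Sum>i\<in>S. ind e i)" by (rule sum.swap)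
    finally show ?thesis .
  qed
  have S1: "{1..k} \<subseteq> {1..n}" and S2: "{n-k+1..n} \<subseteq> {1..n}" using k by auto
  have PD1: "\<And>e. (\<Sum>i\<in>{1..k}. ind e i) \<le> (\<Sum>i\<in>{n-k+1..n}. ind e i)"
    using per_d(1)[OF sds k] unfolding ind_def by blast
  show "multiplicity p (\<Prod>i\<in>{1..k}. a i) \<le> multiplicity p (\<Prod>i\<in>{n-k+1..n}. a i)"
    unfolding mprod[OF S1] mprod[OF S2] by (rule sum_mono) (rule PD1)
  have PD2: "ind e k + (\<Sum>i\<in>{n-k+1..n}. ind e i) \<le> (\<Sum>i\<in>{1..k}. ind e i) + ind e j" for e
  proof -
    have "(if \<exists>i\<in>{1..n}. p ^ e dvd a i then 1 else 0) \<le> ind e j"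
    proof (cases "\<exists>i\<in>{1..n}. p ^ e dvd a i")
      case True
      then obtain i where i: "i \<in> {1..n}" "p ^ e dvd a i" by blast
      have "a i \<noteq> 0" "a j \<noteq> 0" using pos i j by fastforce+
      then have "e \<le> v i" using i power_dvd_iff_le_multiplicity[OF _ nu] unfolding v_def by simp
      then have "e \<le> v j" using vmax[OF i(1)] by simp
      then have "p ^ e dvd a j" using \<open>a j \<noteq> 0\<close> power_dvd_iff_le_multiplicity[OF _ nu]
        unfolding v_def by simp
      then show ?thesis unfolding ind_def by simp
    qed simp
    then show ?thesis using per_d(2)[OF sds k, of "p ^ e"] unfolding ind_def by linarith
  qed
  have kk: "k \<in> {1..n}" using k by simp
  have "multiplicity p (a k) + multiplicity p (\<Prod>i\<in>{n-k+1..n}. a i)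
       = (\<Sum>e\<in>{1..B}. ind e k + (\<Sum>i\<in>{n-k+1..n}. ind e i))"
    unfolding mprod[OF S2] vsum[OF kk, unfolded v_def] by (simp add: sum.distrib)
  also have "\<dots> \<le> (\<Sum>e\<in>{1..B}. (\<Sum>i\<in>{1..k}. ind e i) + ind e j)"
    by (rule sum_mono) (rule PD2)
  also have "\<dots> = multiplicity p (\<Prod>i\<in>{1..k}. a i) + multiplicity p (a j)"
    unfolding mprod[OF S1] vsum[OF j(1), unfolded v_def] by (simp add: sum.distrib)
  finally show "\<exists>j\<in>{1..n}. multiplicity p (a k) + multiplicity p (\<Prod>i\<in>{n-k+1..n}. a i)
            \<le> multiplicity p (\<Prod>i\<in>{1..k}. a i) + multiplicity p (a j)" using j(1) by blast
qed


lemma key: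
  assumes sds: "strong_div_seq a" and k: "1 \<le> k" "k \<le> n"
  shows "a k * abinom a n k dvd Lcm (a ` {1..n})"
proof -
  have pos: "\<And>i. i \<ge> 1 \<Longrightarrow> a i > 0" using sds unfolding strong_div_seq_def by auto
  define P where "P = (\<Prod>i\<in>{n-k+1..n}. a i)"
  define Q where "Q = (\<Prod>i\<in>{1..k}. a i)"
  have P0: "P \<noteq> 0" unfolding P_def using pos by (simp add: Suc_le_eq)
  have Q0: "Q \<noteq> 0" unfolding Q_def using pos by (simp add: Suc_le_eq)
  have "Q dvd P"
  proof (rule multiplicity_le_imp_dvd[OF Q0])
    fix p :: nat assume "prime p"
    then show "multiplicity p Q \<le> multiplicity p P"
      unfolding P_def Q_def by (rule core(1)[OF sds k])
  qed
  then obtain C where PC: "P = Q * C" by blast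
  have C: "abinom a n k = C" unfolding abinom_def P_def[symmetric] Q_def[symmetric] PC
    using Q0 by simp
  have C0: "C \<noteq> 0" using P0 PC by auto
  have ak0: "a k \<noteq> 0" using pos k by fastforce
  define L where "L = Lcm (a ` {1..n})"
  have "0 \<notin> a ` {1..n}"
  proof
    assume "0 \<in> a ` {1..n}"
    then obtain i where i: "i \<in> {1..n}" "0 = a i" by blast
    have "a i > 0" using pos[of i] i(1) by simp
    then show False using i(2) by simp
  qed
  then have L0: "L \<noteq> 0" unfolding L_def using Lcm_0_iff_nat[of "a ` {1..n}"] by simp
  have "a k * C dvd L"
  proof (rule multiplicity_le_imp_dvd)
    show "a k * C \<noteq> 0" using ak0 C0 by simp
    fix p :: nat assume p: "prime p"
    obtain j where j: "j \<in> {1..n}" "multiplicity p (a k) + multiplicity p P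
            \<le> multiplicity p Q + multiplicity p (a j)"
      using core(2)[OF sds k p] unfolding P_def Q_def by blast
    have pe: "prime_elem p" using p by simp
    have mP: "multiplicity p P = multiplicity p Q + multiplicity p C"
      using PC prime_elem_multiplicity_mult_distrib[OF pe Q0 C0] by simp
    have "a j dvd L" unfolding L_def using j(1) by (intro dvd_Lcm) auto
    then have "multiplicity p (a j) \<le> multiplicity p L" using dvd_imp_multiplicity_le L0 by blast
    then show "multiplicity p (a k * C) \<le> multiplicity p L"
      using j(2) mP prime_elem_multiplicity_mult_distrib[OF pe ak0 C0] by simp
  qed
  then show ?thesis unfolding C L_def .
qed

theorem corollary1:
  fixes a :: "nat \<Rightarrow> nat" and n :: nat
  assumes "strong_div_seq a" and "n \<ge> 1"
  shows "Lcm (a ` {1..n}) = Lcm ((\<lambda>k. a k * abinom a n k) ` {1..n})"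
proof (rule dvd_antisym)
  show "Lcm (a ` {1..n}) dvd Lcm ((\<lambda>k. a k * abinom a n k) ` {1..n})"
  proof (rule Lcm_least)
    fix x assume "x \<in> a ` {1..n}"
    then obtain k where k: "k \<in> {1..n}" "x = a k" by blast
    have "a k * abinom a n k dvd Lcm ((\<lambda>k. a k * abinom a n k) ` {1..n})"
      using k(1) by (intro dvd_Lcm imageI)
    then show "x dvd Lcm ((\<lambda>k. a k * abinom a n k) ` {1..n})"
      unfolding k(2) by (rule dvd_mult_left)
  qed
  show "Lcm ((\<lambda>k. a k * abinom a n k) ` {1..n}) dvd Lcm (a ` {1..n})"
  proof (rule Lcm_least)
    fix x assume "x \<in> (\<lambda>k. a k * abinom a n k) ` {1..n}"
    then obtain k where k: "k \<in> {1..n}" "x = a k * abinom a n k" by blast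
    have "1 \<le> k" "k \<le> n" using k(1) by auto
    then show "x dvd Lcm (a ` {1..n})" unfolding k(2) by (rule key[OF assms(1)])
  qed
qed

end
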